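(* Let $(M,\underline{g})$ be a stationary axisymmetric vacuum spacetime with line element, in coordinates $(t,\rho,z,\phi)$, $$\underline{g}=k^2e^{-2\psi}\left[e^{2\gamma}\left(d\rho^2+dz^2\right)+R^2d\phi^2\right]-e^{2\psi}\left(dt-\omega\, d\phi\right)^2,$$ where $k$ is a real constant and $\psi,\gamma,\omega,R$ are smooth functions of $(\rho,z)$ only. Suppose $\eta=C_1\partial_t+C_2\partial_\rho+C_3\partial_z+C_4\partial_\phi$ satisfies $\mathcal{L}_\eta\underline{g}=2\Psi\,\underline{g}$ for a constant $\Psi$, where each component $C_i=C_i(t,\rho)$ is a function of $t$ and $\rho$ only, and suppose $C_2$ and $C_3$ are constants with $C_2=C_3=0$. Then $\Psi=0$, i.e. $\eta$ is a Killing vector, and $\eta=c_1\partial_t+c_4\partial_\phi$ for constants $c_1,c_4$.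
   Context: The metric components are $\underline{g}_{tt}=-e^{2\psi}$, $\underline{g}_{t\phi}=\omega e^{2\psi}$, $\underline{g}_{\rho\rho}=\underline{g}_{zz}=k^2e^{2(\gamma-\psi)}$, and $\underline{g}_{\phi\phi}=W:=k^2R^2e^{-2\psi}-\omega^2e^{2\psi}$. The metric is assumed nondegenerate. The spacetime is a vacuum solution of Einstein's equations, constructed from a complex Ernst potential $\mathcal{E}$ with $\mathrm{Re}(\mathcal{E})=e^{2\psi}$ satisfying $\mathrm{Re}(\mathcal{E})\bar\nabla^2\mathcal{E}=\bar\nabla\mathcal{E}\cdot\bar\nabla\mathcal{E}$ with $\bar\nabla^2=\partial_{\rho\rho}+\rho^{-1}\partial_\rho+\partial_{zz}$, $\bar\nabla=(\partial_\rho,\partial_z)$, and $R$ satisfies $R_{,\rho\rho}+R_{,zz}=0$. A vector field with $\mathcal{L}_\eta\underline{g}=2\Psi\underline{g}$, $\Psi$ constant, is called homothetic; if $\Psi=0$ it is a Killing vector. *)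

theory Defs
  imports "HOL-Analysis.Analysis"
begin

primrec Ck_on :: "nat \<Rightarrow> 'a::real_normed_vector set \<Rightarrow> ('a \<Rightarrow> 'b::real_normed_vector) \<Rightarrow> bool" where
  "Ck_on 0 U f = continuous_on U f"
| "Ck_on (Suc n) U f =
     (f differentiable_on U \<and> (\<forall>v. Ck_on n U (\<lambda>x. frechet_derivative f (at x) v)))"

definition smooth_on :: "'a::real_normed_vector set \<Rightarrow> ('a \<Rightarrow> 'b::real_normed_vector) \<Rightarrow> bool" where
  "smooth_on U f \<longleftrightarrow> open U \<and> (\<forall>n. Ck_on n U f)"

text \<open>Spacetime points are coordinate vectors x in real^4 with
  x$0 = t, x$1 = rho, x$2 = z, x$3 = phi.\<close>

definition pd :: "(real^4 \<Rightarrow> real) \<Rightarrow> 4 \<Rightarrow> real^4 \<Rightarrow> real" where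
  "pd f i x = vector_derivative (\<lambda>s. f (x + s *\<^sub>R axis i 1)) (at 0)"

definition lie_metric :: "(real^4 \<Rightarrow> real^4) \<Rightarrow> (real^4 \<Rightarrow> real^4^4) \<Rightarrow> real^4 \<Rightarrow> 4 \<Rightarrow> 4 \<Rightarrow> real" where
  "lie_metric eta g x a b =
     (\<Sum>c\<in>UNIV. eta x $ c * pd (\<lambda>y. g y $ a $ b) c x
               + g x $ c $ b * pd (\<lambda>y. eta y $ c) a x
               + g x $ a $ c * pd (\<lambda>y. eta y $ c) b x)"

definition homothetic :: "(real^4) set \<Rightarrow> (real^4 \<Rightarrow> real^4^4) \<Rightarrow> (real^4 \<Rightarrow> real^4) \<Rightarrow> real \<Rightarrow> bool" where
  "homothetic \<Omega> g eta \<Psi> \<longleftrightarrow> (\<forall>x\<in>\<Omega>. \<forall>a b. lie_metric eta g x a b = 2 * \<Psi> * g x $ a $ b)"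

definition killing :: "(real^4) set \<Rightarrow> (real^4 \<Rightarrow> real^4^4) \<Rightarrow> (real^4 \<Rightarrow> real^4) \<Rightarrow> bool" where
  "killing \<Omega> g eta \<longleftrightarrow> homothetic \<Omega> g eta 0"

text \<open>The stationary axisymmetric metric
  k^2 e^(-2psi) [e^(2gamma)(drho^2+dz^2) + R^2 dphi^2] - e^(2psi)(dt - omega dphi)^2.\<close>
definition sa_metric :: "real \<Rightarrow> (real \<Rightarrow> real \<Rightarrow> real) \<Rightarrow> (real \<Rightarrow> real \<Rightarrow> real) \<Rightarrow>
    (real \<Rightarrow> real \<Rightarrow> real) \<Rightarrow> (real \<Rightarrow> real \<Rightarrow> real) \<Rightarrow> real^4 \<Rightarrow> real^4^4" where
  "sa_metric k \<psi> \<gamma> \<omega> R x =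
    (let r = x $ 1; z = x $ 2;
         gtt = - exp (2 * \<psi> r z);
         gtp = \<omega> r z * exp (2 * \<psi> r z);
         grr = k\<^sup>2 * exp (2 * (\<gamma> r z - \<psi> r z));
         gpp = k\<^sup>2 * (R r z)\<^sup>2 * exp (- 2 * \<psi> r z) - (\<omega> r z)\<^sup>2 * exp (2 * \<psi> r z)
     in (\<chi> a b. if a = 0 \<and> b = 0 then gtt
                else if (a = 0 \<and> b = 3) \<or> (a = 3 \<and> b = 0) then gtp
                else if (a = 1 \<and> b = 1) \<or> (a = 2 \<and> b = 2) then grr
                else if a = 3 \<and> b = 3 then gpp
                else 0))"

definition coord_field :: "(real \<Rightarrow> real \<Rightarrow> real) \<Rightarrow> (real \<Rightarrow> real \<Rightarrow> real) \<Rightarrow>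
    (real \<Rightarrow> real \<Rightarrow> real) \<Rightarrow> (real \<Rightarrow> real \<Rightarrow> real) \<Rightarrow> real^4 \<Rightarrow> real^4" where
  "coord_field C1 C2 C3 C4 x =
    (\<chi> i. if i = 0 then C1 (x $ 0) (x $ 1)
          else if i = 1 then C2 (x $ 0) (x $ 1)
          else if i = 2 then C3 (x $ 0) (x $ 1)
          else C4 (x $ 0) (x $ 1))"

definition d_rho :: "(real \<Rightarrow> real \<Rightarrow> 'b::real_normed_vector) \<Rightarrow> real \<Rightarrow> real \<Rightarrow> 'b" where
  "d_rho f r z = vector_derivative (\<lambda>s. f s z) (at r)"

definition d_z :: "(real \<Rightarrow> real \<Rightarrow> 'b::real_normed_vector) \<Rightarrow> real \<Rightarrow> real \<Rightarrow> 'b" where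
  "d_z f r z = vector_derivative (\<lambda>s. f r s) (at z)"

end

theory Submission imports Defs begin
lemma partial_t: fixes F :: "real\<times>real \<Rightarrow> real"
  assumes "(F has_derivative F') (at (t,r))"
  shows "vector_derivative (\<lambda>s. F (t+s, r)) (at 0) = F' (1,0)"
proof -
  have l: "linear F'" using assms has_derivative_linear by blast
  have d1: "((\<lambda>s. (t+s, r)) has_derivative (\<lambda>h. (h,0))) (at (0::real))"
    by (auto intro!: derivative_eq_intros)
  have "((\<lambda>s. F (t+s, r)) has_derivative (\<lambda>h. F' (h,0))) (at 0)"
    using has_derivative_compose[OF d1, of F F'] assms by simp
  moreover have "(\<lambda>h. F' (h,0)) = (\<lambda>h. h *\<^sub>R F' (1,0))"
  proof
    fix h :: real have "(h,0::real) = h *\<^sub>R (1,0)" by simp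
    then show "F' (h,0) = h *\<^sub>R F' (1,0)" using linear_scale[OF l] by metis
  qed
  ultimately show ?thesis using vector_derivative_at has_vector_derivative_def by metis
qed
lemma partial_r: fixes F :: "real\<times>real \<Rightarrow> real"
  assumes "(F has_derivative F') (at (t,r))"
  shows "vector_derivative (\<lambda>s. F (t, r+s)) (at 0) = F' (0,1)"
proof -
  have l: "linear F'" using assms has_derivative_linear by blast
  have d1: "((\<lambda>s. (t, r+s)) has_derivative (\<lambda>h. (0,h))) (at (0::real))"
    by (auto intro!: derivative_eq_intros)
  have "((\<lambda>s. F (t, r+s)) has_derivative (\<lambda>h. F' (0,h))) (at 0)"
    using has_derivative_compose[OF d1, of F F'] assms by simp
  moreover have "(\<lambda>h. F' (0,h)) = (\<lambda>h. h *\<^sub>R F' (0,1))"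
  proof
    fix h :: real have "(0::real,h) = h *\<^sub>R (0,1)" by simp
    then show "F' (0,h) = h *\<^sub>R F' (0,1)" using linear_scale[OF l] by metis
  qed
  ultimately show ?thesis using vector_derivative_at has_vector_derivative_def by metis
qed
lemma zero_deriv: fixes F :: "real\<times>real \<Rightarrow> real"
  assumes "(F has_derivative F') (at p)" "F' (1,0) = 0" "F' (0,1) = 0"
  shows "(F has_derivative (\<lambda>h. 0)) (at p)"
proof -
  have l: "linear F'" using assms has_derivative_linear by blast
  have "F' = (\<lambda>h. 0)"
  proof
    fix h :: "real\<times>real"
    have "h = fst h *\<^sub>R (1,0) + snd h *\<^sub>R (0,1)" by (cases h) simp
    then have "F' h = fst h *\<^sub>R F' (1,0) + snd h *\<^sub>R F' (0,1)"
      using linear_add[OF l] linear_scale[OF l] by metis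
    then show "F' h = 0" using assms by simp
  qed
  then show ?thesis using assms by simp
qed
lemma nz_ker: fixes A :: "real^'n^'n" assumes "det A \<noteq> 0" "A *v v = 0" shows "v = 0"
  using inj_matrix_vector_mult[of A] assms invertible_det_nz[of A]
  by (metis injD matrix_vector_mult_0_right)
lemma sum_4': "sum f (UNIV::4 set) = f 0 + f 1 + f 2 + f 3"
proof -
  have h: "(4::4) = 0" by simp
  have "(UNIV::4 set) = {0,1,2,3}" using UNIV_4 unfolding h by auto
  then have "sum f (UNIV::4 set) = sum f {0,1,2,3}" by (simp only:)
  also have "\<dots> = f 0 + f 1 + f 2 + f 3" by (simp add: ac_simps)
  finally show ?thesis .
qed
lemma pd_zero: "pd (\<lambda>y. 0) i x = 0" unfolding pd_def by simp
lemma pd_const: assumes "\<And>s. f (x + s *\<^sub>R axis i 1) = f x" shows "pd f i x = 0"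
  unfolding pd_def assms by simp

lemma ker2:
  fixes G :: "real^4^4"
  assumes "det G \<noteq> 0" "G$0$0 * a + G$0$3 * b = 0" "G$3$0 * a + G$3$3 * b = 0"
    "G$1$0 = 0" "G$1$3 = 0" "G$2$0 = 0" "G$2$3 = 0"
  shows "a = 0 \<and> b = 0"
proof -
  define v :: "real^4" where "v = (\<chi> i. if i = 0 then a else if i = 3 then b else 0)"
  have "G *v v = 0"
  proof (subst vec_eq_iff, rule allI)
    fix i :: 4
    have "(G *v v) $ i = G$i$0 * a + G$i$3 * b"
      by (simp add: matrix_vector_mult_def sum_4' v_def)
    moreover have "i = 1 \<or> i = 2 \<or> i = 3 \<or> i = 0" using exhaust_4[of i] by auto
    ultimately show "(G *v v) $ i = 0 $ i" using assms by auto
  qed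
  then have "v = 0" using nz_ker assms(1) by blast
  then have "v $ 0 = 0" "v $ 3 = 0" by simp_all
  then show ?thesis by (simp add: v_def)
qed

lemma const_on:
  fixes F :: "real \<times> real \<Rightarrow> real"
  assumes sm: "smooth_on S F" and conn: "connected S"
    and d: "\<And>p F'. p \<in> S \<Longrightarrow> (F has_derivative F') (at p) \<Longrightarrow> F' (1,0) = 0 \<and> F' (0,1) = 0"
  shows "\<exists>c. \<forall>p\<in>S. F p = c"
proof (cases "S = {}")
  case True then show ?thesis by simp
next
  case False
  then obtain p0 where p0: "p0 \<in> S" by blast
  have op: "open S" using sm by (simp add: smooth_on_def)
  have "Ck_on (Suc 0) S F" using sm by (simp only: smooth_on_def)
  then have dif: "F differentiable_on S" by simp
  have zd: "(F has_derivative (\<lambda>h. 0)) (at p)" if "p \<in> S" for p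
  proof -
    have "F differentiable (at p within S)" using dif that by (simp add: differentiable_on_def)
    then have "F differentiable (at p)" using at_within_open[OF that op] by simp
    then obtain F' where F': "(F has_derivative F') (at p)" by (auto simp: differentiable_def)
    show ?thesis using zero_deriv[OF F'] d[OF that F'] by blast
  qed
  show ?thesis
    using has_derivative_zero_unique_connected[OF op conn zd _ p0] by blast
qed

theorem proposition5:
  fixes k \<Psi> :: real
    and \<psi> \<gamma> \<omega> R :: "real \<Rightarrow> real \<Rightarrow> real"
    and \<E> :: "real \<Rightarrow> real \<Rightarrow> complex"
    and C1 C2 C3 C4 :: "real \<Rightarrow> real \<Rightarrow> real"
    and D :: "(real \<times> real) set"
  defines "\<Omega> \<equiv> {x :: real^4. (x $ 1, x $ 2) \<in> D}"
  defines "g \<equiv> sa_metric k \<psi> \<gamma> \<omega> R"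
  defines "\<eta> \<equiv> coord_field C1 C2 C3 C4"
  assumes D_open: "open D" and D_conn: "connected D" and D_ne: "D \<noteq> {}"
    and smooth_psi: "smooth_on D (\<lambda>(r, z). \<psi> r z)"
    and smooth_gamma: "smooth_on D (\<lambda>(r, z). \<gamma> r z)"
    and smooth_omega: "smooth_on D (\<lambda>(r, z). \<omega> r z)"
    and smooth_R: "smooth_on D (\<lambda>(r, z). R r z)"
    and smooth_E: "smooth_on D (\<lambda>(r, z). \<E> r z)"
    and ernst_re: "\<forall>(r, z)\<in>D. Re (\<E> r z) = exp (2 * \<psi> r z)"
    and ernst_eq: "\<forall>(r, z)\<in>D.
          complex_of_real (Re (\<E> r z)) *
            (d_rho (d_rho \<E>) r z + d_rho \<E> r z / complex_of_real r + d_z (d_z \<E>) r z)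
          = (d_rho \<E> r z)\<^sup>2 + (d_z \<E> r z)\<^sup>2"
    and R_harm: "\<forall>(r, z)\<in>D. d_rho (d_rho R) r z + d_z (d_z R) r z = 0"
    and nondeg: "\<forall>x\<in>\<Omega>. det (g x) \<noteq> 0"
    and smooth_C1: "smooth_on (UNIV \<times> fst ` D) (\<lambda>(t, r). C1 t r)"
    and smooth_C2: "smooth_on (UNIV \<times> fst ` D) (\<lambda>(t, r). C2 t r)"
    and smooth_C3: "smooth_on (UNIV \<times> fst ` D) (\<lambda>(t, r). C3 t r)"
    and smooth_C4: "smooth_on (UNIV \<times> fst ` D) (\<lambda>(t, r). C4 t r)"
    and C2_zero: "\<forall>t r. C2 t r = 0"
    and C3_zero: "\<forall>t r. C3 t r = 0"
    and homot: "homothetic \<Omega> g \<eta> \<Psi>"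
  shows "\<Psi> = 0 \<and> killing \<Omega> g \<eta> \<and>
         (\<exists>c1 c4 :: real. \<forall>x\<in>\<Omega>. \<eta> x = c1 *\<^sub>R axis 0 1 + c4 *\<^sub>R axis 3 1)"
proof -
  have heta: "\<And>y. \<eta> y $ 1 = 0" "\<And>y. \<eta> y $ 2 = 0"
    by (simp_all add: \<eta>_def coord_field_def C2_zero C3_zero)
  have gent: "\<And>x a. g x $ a $ 1 = (if a = 1 then k\<^sup>2 * exp (2 * (\<gamma> (x$1) (x$2) - \<psi> (x$1) (x$2))) else 0)"
     "\<And>x. g x $ 0 $ 0 = - exp (2 * \<psi> (x$1) (x$2))"
     "\<And>x. g x $ 0 $ 3 = \<omega> (x$1) (x$2) * exp (2 * \<psi> (x$1) (x$2))"
     "\<And>x. g x $ 3 $ 0 = \<omega> (x$1) (x$2) * exp (2 * \<psi> (x$1) (x$2))"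
     "\<And>x. g x $ 3 $ 3 = k\<^sup>2 * (R (x$1) (x$2))\<^sup>2 * exp (- 2 * \<psi> (x$1) (x$2)) - (\<omega> (x$1) (x$2))\<^sup>2 * exp (2 * \<psi> (x$1) (x$2))"
     "\<And>x. g x $ 1 $ 0 = 0" "\<And>x. g x $ 1 $ 3 = 0" "\<And>x. g x $ 2 $ 0 = 0" "\<And>x. g x $ 2 $ 3 = 0"
     "\<And>x. g x $ 0 $ 2 = 0" "\<And>x. g x $ 3 $ 2 = 0"
    by (auto simp: g_def sa_metric_def Let_def)
  have key: "lie_metric \<eta> g x 1 1 = 0 \<and>
       lie_metric \<eta> g x 0 0 = 2 * (g x $ 0 $ 0 * pd (\<lambda>y. \<eta> y $ 0) 0 x + g x $ 0 $ 3 * pd (\<lambda>y. \<eta> y $ 3) 0 x) \<and>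
       lie_metric \<eta> g x 0 3 = g x $ 0 $ 3 * pd (\<lambda>y. \<eta> y $ 0) 0 x + g x $ 3 $ 3 * pd (\<lambda>y. \<eta> y $ 3) 0 x \<and>
       lie_metric \<eta> g x 0 1 = g x $ 0 $ 0 * pd (\<lambda>y. \<eta> y $ 0) 1 x + g x $ 0 $ 3 * pd (\<lambda>y. \<eta> y $ 3) 1 x \<and>
       lie_metric \<eta> g x 1 3 = g x $ 0 $ 3 * pd (\<lambda>y. \<eta> y $ 0) 1 x + g x $ 3 $ 3 * pd (\<lambda>y. \<eta> y $ 3) 1 x"
     for x
  proof -
    have hg0: "\<And>a b. pd (\<lambda>y. g y $a$b) 0 x = 0"
      by (rule pd_const) (simp add: g_def sa_metric_def axis_def)
    have hg3: "\<And>a b. pd (\<lambda>y. g y $a$b) 3 x = 0"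
      by (rule pd_const) (simp add: g_def sa_metric_def axis_def)
    have hde1: "\<And>i. pd (\<lambda>y. \<eta> y $ 1) i x = 0" "\<And>i. pd (\<lambda>y. \<eta> y $ 2) i x = 0"
      by (rule pd_const, simp add: heta)+
    have hdi: "\<And>c. pd (\<lambda>y. \<eta> y $ c) 2 x = 0" "\<And>c. pd (\<lambda>y. \<eta> y $ c) 3 x = 0"
      by (rule pd_const, simp add: \<eta>_def coord_field_def axis_def)+
    show ?thesis
      by (simp_all only: lie_metric_def sum_4' hg0 hg3 hde1 hdi heta pd_zero; simp add: gent)
  qed
  have hom: "\<And>x a b. x \<in> \<Omega> \<Longrightarrow> lie_metric \<eta> g x a b = 2 * \<Psi> * g x $ a $ b"
    using homot by (simp add: homothetic_def)
  obtain r0 z0 where rz0: "(r0, z0) \<in> D" using D_ne by auto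
  define x0 :: "real^4" where "x0 = (\<chi> i. if i = 1 then r0 else if i = 2 then z0 else 0)"
  have x0O: "x0 \<in> \<Omega>" using rz0 by (simp add: \<Omega>_def x0_def)
  have Psi0: "\<Psi> = 0"
  proof (rule ccontr)
    assume nz: "\<Psi> \<noteq> 0"
    have "2 * \<Psi> * g x0 $ 1 $ 1 = 0" using hom[OF x0O, of 1 1] key[of x0] by simp
    then have "k = 0" using nz by (simp add: gent)
    then have "g x0 *v axis 1 1 = 0"
      by (simp add: vec_eq_iff matrix_vector_mult_def axis_def sum_4' gent)
    then have "axis 1 (1::real) = (0::real^4)" using nz_ker nondeg x0O by blast
    then show False by (metis axis_eq_0_iff zero_neq_one)
  qed
  have dz: "pd (\<lambda>y. \<eta> y $ 0) 0 x = 0 \<and> pd (\<lambda>y. \<eta> y $ 3) 0 x = 0 \<and>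
            pd (\<lambda>y. \<eta> y $ 0) 1 x = 0 \<and> pd (\<lambda>y. \<eta> y $ 3) 1 x = 0" if xO: "x \<in> \<Omega>" for x
  proof -
    have L: "\<And>a b. lie_metric \<eta> g x a b = 0" using hom[OF xO] Psi0 by simp
    have dn: "det (g x) \<noteq> 0" using nondeg xO by blast
    have "pd (\<lambda>y. \<eta> y $ 0) 0 x = 0 \<and> pd (\<lambda>y. \<eta> y $ 3) 0 x = 0"
      apply (rule ker2[OF dn])
      using key[of x] L[of 0 0] L[of 0 3] by (simp_all add: gent)
    moreover have "pd (\<lambda>y. \<eta> y $ 0) 1 x = 0 \<and> pd (\<lambda>y. \<eta> y $ 3) 1 x = 0"
      apply (rule ker2[OF dn])
      using key[of x] L[of 0 1] L[of 1 3] by (simp_all add: gent)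
    ultimately show ?thesis by blast
  qed
  have killing: "killing \<Omega> g \<eta>" using homot Psi0 by (simp add: killing_def)
  let ?S = "(UNIV::real set) \<times> fst ` D"
  have connS: "connected ?S"
  proof (rule connected_Times)
    show "connected (UNIV::real set)" by (simp add: convex_connected)
    show "connected (fst ` D)"
      by (rule connected_continuous_image[OF _ D_conn]) (intro continuous_intros)
  qed
  have ptx: "\<exists>x\<in>\<Omega>. x $ 0 = t \<and> x $ 1 = r \<and>
      (\<forall>f. pd (\<lambda>y. f (y $ 0) (y $ 1)) 0 x = vector_derivative (\<lambda>s. f (t+s) r) (at 0)) \<and>
      (\<forall>f. pd (\<lambda>y. f (y $ 0) (y $ 1)) 1 x = vector_derivative (\<lambda>s. f t (r+s)) (at 0))"
    if tr: "(t, r) \<in> ?S" for t r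
  proof -
    obtain z where "(r, z) \<in> D" using tr by force
    define x :: "real^4" where "x = (\<chi> i. if i = 0 then t else if i = 1 then r else if i = 2 then z else 0)"
    have "x \<in> \<Omega>" using \<open>(r, z) \<in> D\<close> by (simp add: \<Omega>_def x_def)
    moreover have "x $ 0 = t \<and> x $ 1 = r" by (simp add: x_def)
    moreover have "\<forall>f. pd (\<lambda>y. f (y $ 0) (y $ 1)) 0 x = vector_derivative (\<lambda>s. f (t+s) r) (at 0)"
      by (simp add: pd_def x_def axis_def add.commute)
    moreover have "\<forall>f. pd (\<lambda>y. f (y $ 0) (y $ 1)) 1 x = vector_derivative (\<lambda>s. f t (r+s)) (at 0)"
      by (simp add: pd_def x_def axis_def add.commute)
    ultimately show ?thesis by blast
  qed
  have eta0: "(\<lambda>y. \<eta> y $ 0) = (\<lambda>y. C1 (y $ 0) (y $ 1))" by (simp add: \<eta>_def coord_field_def)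
  have eta3: "(\<lambda>y. \<eta> y $ 3) = (\<lambda>y. C4 (y $ 0) (y $ 1))" by (simp add: \<eta>_def coord_field_def)
  have "\<exists>c. \<forall>p\<in>?S. (\<lambda>(t, r). C1 t r) p = c"
  proof (rule const_on[OF smooth_C1 connS])
    fix p F' assume p: "p \<in> ?S" and F': "((\<lambda>(t, r). C1 t r) has_derivative F') (at p)"
    obtain t r where pe: "p = (t, r)" by force
    obtain x where x: "x \<in> \<Omega>" "x $ 0 = t" "x $ 1 = r"
      "\<forall>f. pd (\<lambda>y. f (y $ 0) (y $ 1)) 0 x = vector_derivative (\<lambda>s. f (t+s) r) (at 0)"
      "\<forall>f. pd (\<lambda>y. f (y $ 0) (y $ 1)) 1 x = vector_derivative (\<lambda>s. f t (r+s)) (at 0)"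
      using ptx p pe by blast
    have "F' (1,0) = vector_derivative (\<lambda>s. C1 (t+s) r) (at 0)"
      using partial_t[of "\<lambda>(t, r). C1 t r" F' t r] F' pe by simp
    also have "\<dots> = 0" using x dz[OF x(1)] eta0 by simp
    finally have 1: "F' (1,0) = 0" .
    have "F' (0,1) = vector_derivative (\<lambda>s. C1 t (r+s)) (at 0)"
      using partial_r[of "\<lambda>(t, r). C1 t r" F' t r] F' pe by simp
    also have "\<dots> = 0" using x dz[OF x(1)] eta0 by simp
    finally show "F' (1,0) = 0 \<and> F' (0,1) = 0" using 1 by simp
  qed
  then obtain c1 where c1: "\<And>t r. (t, r) \<in> ?S \<Longrightarrow> C1 t r = c1" by fastforce
  have "\<exists>c. \<forall>p\<in>?S. (\<lambda>(t, r). C4 t r) p = c"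
  proof (rule const_on[OF smooth_C4 connS])
    fix p F' assume p: "p \<in> ?S" and F': "((\<lambda>(t, r). C4 t r) has_derivative F') (at p)"
    obtain t r where pe: "p = (t, r)" by force
    obtain x where x: "x \<in> \<Omega>" "x $ 0 = t" "x $ 1 = r"
      "\<forall>f. pd (\<lambda>y. f (y $ 0) (y $ 1)) 0 x = vector_derivative (\<lambda>s. f (t+s) r) (at 0)"
      "\<forall>f. pd (\<lambda>y. f (y $ 0) (y $ 1)) 1 x = vector_derivative (\<lambda>s. f t (r+s)) (at 0)"
      using ptx p pe by blast
    have "F' (1,0) = vector_derivative (\<lambda>s. C4 (t+s) r) (at 0)"
      using partial_t[of "\<lambda>(t, r). C4 t r" F' t r] F' pe by simp
    also have "\<dots> = 0" using x dz[OF x(1)] eta3 by simp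
    finally have 1: "F' (1,0) = 0" .
    have "F' (0,1) = vector_derivative (\<lambda>s. C4 t (r+s)) (at 0)"
      using partial_r[of "\<lambda>(t, r). C4 t r" F' t r] F' pe by simp
    also have "\<dots> = 0" using x dz[OF x(1)] eta3 by simp
    finally show "F' (1,0) = 0 \<and> F' (0,1) = 0" using 1 by simp
  qed
  then obtain c4 where c4: "\<And>t r. (t, r) \<in> ?S \<Longrightarrow> C4 t r = c4" by fastforce
  have "\<forall>x\<in>\<Omega>. \<eta> x = c1 *\<^sub>R axis 0 1 + c4 *\<^sub>R axis 3 1"
  proof
    fix x assume "x \<in> \<Omega>"
    then have S: "(x $ 0, x $ 1) \<in> ?S" by (force simp: \<Omega>_def)
    show "\<eta> x = c1 *\<^sub>R axis 0 1 + c4 *\<^sub>R axis 3 1"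
    proof (subst vec_eq_iff, rule allI)
      fix i :: 4
      have "i = 1 \<or> i = 2 \<or> i = 3 \<or> i = 0" using exhaust_4[of i] by auto
      then show "\<eta> x $ i = (c1 *\<^sub>R axis 0 1 + c4 *\<^sub>R axis 3 1) $ i"
        using c1[OF S] c4[OF S] by (auto simp: \<eta>_def coord_field_def axis_def C2_zero C3_zero)
    qed
  qed
  then show ?thesis using Psi0 killing by blast
qed
end
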